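(* In the setting below, the image of $\bar\rho\colon\bar G\to\bar A$ is a normal subgroup of $\bar A$.
   Context: Let $G$ be a group generated by $a_1,\dots,a_n$ with $z=a_1\cdots a_n$ central. Let $S_1,\dots,S_m\subseteq\{1,\dots,n\}$ with $|S_i\cap S_r|\le1$ for $i\neq r$. For $S\subseteq\{1,\dots,n\}$ let $G_S$ be the quotient of $G$ by the normal closure of $\{a_j:j\notin S\}$; let $a_{ij}$ be the image of $a_j$ in $G_{S_i}$ and $z_i=a_{i1}\cdots a_{in}$ (central in $G_{S_i}$). Let $\bar G=G/\langle z\rangle$, $\bar G_{S_i}=G_{S_i}/\langle z_i\rangle$, and assume each $\bar G_{S_i}$ is free of rank $|S_i|-1$, the images of any $|S_i|-1$ of the $a_{ij}$, $j\in S_i$, forming a free basis. Let $\bar A=\prod_{i=1}^m\bar G_{S_i}$ and $\bar\rho\colon\bar G\to\bar A$ the homomorphism induced by the product of the projections $G\to G_{S_i}$. *)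

theory Defs
  imports "HOL-Algebra.Algebra"
begin

definition mprod :: "('a, 'b) monoid_scheme \<Rightarrow> 'a list \<Rightarrow> 'a" where
  "mprod G xs = foldr (\<lambda>x y. x \<otimes>\<^bsub>G\<^esub> y) xs \<one>\<^bsub>G\<^esub>"

definition nclosure :: "('a, 'b) monoid_scheme \<Rightarrow> 'a set \<Rightarrow> 'a set" where
  "nclosure G Y = generate G (\<Union>g\<in>carrier G. (\<lambda>x. g \<otimes>\<^bsub>G\<^esub> x \<otimes>\<^bsub>G\<^esub> m_inv G g) ` Y)"

definition word_eval :: "('a, 'b) monoid_scheme \<Rightarrow> ('i \<Rightarrow> 'a) \<Rightarrow> ('i \<times> bool) list \<Rightarrow> 'a" where
  "word_eval H b w = foldr (\<lambda>(i, e) y. (if e then b i else m_inv H (b i)) \<otimes>\<^bsub>H\<^esub> y) w \<one>\<^bsub>H\<^esub>"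

definition reduced_word :: "('i \<times> bool) list \<Rightarrow> bool" where
  "reduced_word w \<longleftrightarrow> (\<forall>k. Suc k < length w \<longrightarrow>
      \<not> (fst (w ! k) = fst (w ! Suc k) \<and> snd (w ! k) \<noteq> snd (w ! Suc k)))"

definition free_basis :: "('a, 'b) monoid_scheme \<Rightarrow> 'i set \<Rightarrow> ('i \<Rightarrow> 'a) \<Rightarrow> bool" where
  "free_basis H I b \<longleftrightarrow> b ` I \<subseteq> carrier H \<and> generate H (b ` I) = carrier H \<and>
     (\<forall>w. set (map fst w) \<subseteq> I \<longrightarrow> reduced_word w \<longrightarrow> w \<noteq> [] \<longrightarrow> word_eval H b w \<noteq> \<one>\<^bsub>H\<^esub>)"

definition NS :: "('a, 'b) monoid_scheme \<Rightarrow> (nat \<Rightarrow> 'a) \<Rightarrow> nat \<Rightarrow> nat set \<Rightarrow> 'a set" where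
  "NS G a n S = nclosure G (a ` ({1..n} - S))"

definition GS :: "('a, 'b) monoid_scheme \<Rightarrow> (nat \<Rightarrow> 'a) \<Rightarrow> nat \<Rightarrow> nat set \<Rightarrow> 'a set monoid" where
  "GS G a n S = G Mod NS G a n S"

definition projS :: "('a, 'b) monoid_scheme \<Rightarrow> (nat \<Rightarrow> 'a) \<Rightarrow> nat \<Rightarrow> nat set \<Rightarrow> 'a \<Rightarrow> 'a set" where
  "projS G a n S g = NS G a n S #>\<^bsub>G\<^esub> g"

definition zS :: "('a, 'b) monoid_scheme \<Rightarrow> (nat \<Rightarrow> 'a) \<Rightarrow> nat \<Rightarrow> nat set \<Rightarrow> 'a set" where
  "zS G a n S = mprod (GS G a n S) (map (\<lambda>j. projS G a n S (a j)) [1..<Suc n])"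

definition GbarS :: "('a, 'b) monoid_scheme \<Rightarrow> (nat \<Rightarrow> 'a) \<Rightarrow> nat \<Rightarrow> nat set \<Rightarrow> 'a set set monoid" where
  "GbarS G a n S = GS G a n S Mod generate (GS G a n S) {zS G a n S}"

definition projbarS :: "('a, 'b) monoid_scheme \<Rightarrow> (nat \<Rightarrow> 'a) \<Rightarrow> nat \<Rightarrow> nat set \<Rightarrow> 'a \<Rightarrow> 'a set set" where
  "projbarS G a n S g = generate (GS G a n S) {zS G a n S} #>\<^bsub>GS G a n S\<^esub> projS G a n S g"

definition zG :: "('a, 'b) monoid_scheme \<Rightarrow> (nat \<Rightarrow> 'a) \<Rightarrow> nat \<Rightarrow> 'a" where
  "zG G a n = mprod G (map a [1..<Suc n])"

definition Gbar :: "('a, 'b) monoid_scheme \<Rightarrow> (nat \<Rightarrow> 'a) \<Rightarrow> nat \<Rightarrow> 'a set monoid" where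
  "Gbar G a n = G Mod generate G {zG G a n}"

definition Abar :: "('a, 'b) monoid_scheme \<Rightarrow> (nat \<Rightarrow> 'a) \<Rightarrow> nat \<Rightarrow> (nat \<Rightarrow> nat set) \<Rightarrow> nat
    \<Rightarrow> (nat \<Rightarrow> 'a set set) monoid" where
  "Abar G a n Ss m = product_group {1..m} (\<lambda>i. GbarS G a n (Ss i))"

definition rhobar :: "('a, 'b) monoid_scheme \<Rightarrow> (nat \<Rightarrow> 'a) \<Rightarrow> nat \<Rightarrow> (nat \<Rightarrow> nat set) \<Rightarrow> nat
    \<Rightarrow> 'a set \<Rightarrow> (nat \<Rightarrow> 'a set set)" where
  "rhobar G a n Ss m C = (\<lambda>i\<in>{1..m}. projbarS G a n (Ss i) (SOME g. g \<in> C))"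

end

theory Submission
  imports Defs
begin


lemma (in group) comm_inv':
  assumes "x \<in> carrier G" "y \<in> carrier G" "x \<otimes> y = y \<otimes> x"
  shows "x \<otimes> inv y = inv y \<otimes> x"
proof -
  have "x \<otimes> inv y = inv y \<otimes> (y \<otimes> x) \<otimes> inv y" using assms by (simp add: m_assoc[symmetric])
  also have "\<dots> = inv y \<otimes> x" using assms by (simp flip: assms(3)) (simp add: m_assoc)
  finally show ?thesis .
qed

lemma nclosure_normal:
  fixes G :: "('a,'b) monoid_scheme" (structure)
  assumes G: "group G" and Y: "Y \<subseteq> carrier G"
  shows "nclosure G Y \<lhd> G" "Y \<subseteq> nclosure G Y"
proof -
  interpret group G by fact
  let ?C = "(\<Union>g\<in>carrier G. (\<lambda>x. g \<otimes> x \<otimes> inv g) ` Y)"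
  have C: "?C \<subseteq> carrier G" using Y by auto
  show "nclosure G Y \<lhd> G" unfolding nclosure_def
  proof (rule normal_generateI[OF C])
    fix h g assume h: "h \<in> ?C" and g: "g \<in> carrier G"
    then obtain g0 y where g0: "g0 \<in> carrier G" "y \<in> Y" "h = g0 \<otimes> y \<otimes> inv g0" by auto
    have "g \<otimes> h \<otimes> inv g = (g \<otimes> g0) \<otimes> y \<otimes> inv (g \<otimes> g0)"
      using g g0 Y by (auto simp: m_assoc inv_mult_group)
    thus "g \<otimes> h \<otimes> inv g \<in> ?C" using g g0 by blast
  qed
  show "Y \<subseteq> nclosure G Y" unfolding nclosure_def
  proof
    fix y assume y: "y \<in> Y"
    hence "y = \<one> \<otimes> y \<otimes> inv \<one>" using Y by auto
    hence "y \<in> ?C" using y by blast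
    thus "y \<in> generate G ?C" by (rule generate.incl)
  qed
qed

lemma mprod_carrier:
  assumes "group G" "set xs \<subseteq> carrier G" shows "mprod G xs \<in> carrier G"
  using assms by (induction xs) (auto simp: mprod_def group.is_monoid monoid.m_closed)

lemma mprod_hom:
  assumes "group G" "group H" "f \<in> hom G H" "set xs \<subseteq> carrier G"
  shows "mprod H (map f xs) = f (mprod G xs)"
  using assms(4)
proof (induction xs)
  case Nil then show ?case using assms by (simp add: mprod_def hom_one)
next
  case (Cons x xs)
  have "mprod G xs \<in> carrier G" using Cons mprod_carrier[OF assms(1)] by auto
  then show ?case using Cons assms by (simp add: mprod_def hom_mult)
qed

lemma central_generate_normal:
  fixes H :: "('a,'b) monoid_scheme" (structure)
  assumes H: "group H" and z: "z \<in> carrier H" and c: "\<forall>g\<in>carrier H. z \<otimes>\<^bsub>H\<^esub> g = g \<otimes>\<^bsub>H\<^esub> z"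
  shows "generate H {z} \<lhd> H"
proof -
  interpret group H by fact
  have cen: "\<forall>g\<in>carrier H. x \<otimes> g = g \<otimes> x" if "x \<in> generate H {z}" for x
    using that
  proof (induction rule: generate.induct)
    case (inv h)
    then have h: "h = z" by auto
    show ?case
    proof
      fix g assume g: "g \<in> carrier H"
      have "z \<otimes> inv g = inv g \<otimes> z" using c g by auto
      hence "inv (z \<otimes> inv g) = inv (inv g \<otimes> z)" by simp
      thus "inv h \<otimes> g = g \<otimes> inv h" using g z h by (simp add: inv_mult_group)
    qed
  next
    case (eng h1 h2)
    have "h1 \<in> carrier H" "h2 \<in> carrier H"
      using eng(1,2) generate_in_carrier[of "{z}"] z by auto
    then show ?case using eng by (metis m_assoc)
  qed (use c in auto)
  show ?thesis
  proof (subst normal_inv_iff, intro conjI ballI)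
    show "subgroup (generate H {z}) H" using z by (intro generate_is_subgroup) auto
    fix x h assume x: "x \<in> carrier H" and h: "h \<in> generate H {z}"
    have hc: "h \<in> carrier H" using h generate_in_carrier[of "{z}"] z by auto
    have "x \<otimes> h \<otimes> inv x = x \<otimes> (inv x \<otimes> h)" using cen[OF h] x hc by (simp add: m_assoc)
    also have "\<dots> = h" using x hc by (simp add: m_assoc[symmetric])
    finally have "x \<otimes> h \<otimes> inv x = h" .
    thus "x \<otimes> h \<otimes> inv x \<in> generate H {z}" using h by simp
  qed
qed

lemma quot_facts:
  assumes N: "N \<lhd> G" and G: "group G"
  shows "group (G Mod N)" "(\<lambda>x. N #>\<^bsub>G\<^esub> x) \<in> hom G (G Mod N)"
    "(\<lambda>x. N #>\<^bsub>G\<^esub> x) ` carrier G = carrier (G Mod N)"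
    "\<And>x. x \<in> N \<Longrightarrow> N #>\<^bsub>G\<^esub> x = \<one>\<^bsub>G Mod N\<^esub>"
  using normal.factorgroup_is_group[OF N] normal.r_coset_hom_Mod[OF N] carrier_FactGroup
    subgroup.rcos_const[OF normal_imp_subgroup[OF N] G] by auto

lemma comm_generate:
  assumes G: "group G" and Q: "group Q" and f: "f \<in> hom G Q" and A: "A \<subseteq> carrier G"
    and c: "c \<in> carrier Q" and ca: "\<forall>a\<in>A. c \<otimes>\<^bsub>Q\<^esub> f a = f a \<otimes>\<^bsub>Q\<^esub> c"
    and x: "x \<in> generate G A"
  shows "c \<otimes>\<^bsub>Q\<^esub> f x = f x \<otimes>\<^bsub>Q\<^esub> c"
  using x
proof (induction rule: generate.induct)
  case one
  then show ?case using G Q f c by (simp add: hom_one group.is_monoid)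
next
  case (incl h) then show ?case using ca by auto
next
  case (inv h)
  interpret group_hom G Q f using G Q f by (simp add: group_hom_def group_hom_axioms_def)
  have h: "h \<in> carrier G" using inv A by auto
  have fh: "f h \<in> carrier Q" using h by simp
  have "c \<otimes>\<^bsub>Q\<^esub> f h = f h \<otimes>\<^bsub>Q\<^esub> c" using ca inv by auto
  then show ?case using h fh c H.comm_inv' by simp
next
  case (eng h1 h2)
  interpret group_hom G Q f using G Q f by (simp add: group_hom_def group_hom_axioms_def)
  have "h1 \<in> carrier G" "h2 \<in> carrier G" using eng(1,2) G.generate_in_carrier[OF A] by auto
  then show ?case using eng c by (simp add: H.m_assoc[symmetric]) (simp add: H.m_assoc)
qed



lemma (in group) comm_iff_one:
  assumes "x \<in> carrier G" "y \<in> carrier G"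
  shows "x \<otimes> y \<otimes> inv x \<otimes> inv y = \<one> \<longleftrightarrow> x \<otimes> y = y \<otimes> x"
proof -
  have e: "x \<otimes> y \<otimes> inv x \<otimes> inv y = (x \<otimes> y) \<otimes> inv (y \<otimes> x)"
    using assms by (simp add: inv_mult_group m_assoc)
  show ?thesis unfolding e using assms
    by (metis inv_closed m_closed r_inv inv_equality l_inv_ex inv_inv)
qed

lemma comm_mod:
  fixes G :: "('a,'b) monoid_scheme" (structure)
  assumes G: "group G" and N: "N \<lhd> G" and A: "A \<subseteq> carrier G" and gen: "generate G A = carrier G"
    and hA: "\<forall>x\<in>A. \<forall>y\<in>A. x \<otimes> y \<otimes> inv x \<otimes> inv y \<in> N"
    and x: "x \<in> carrier G" and y: "y \<in> carrier G"
  shows "x \<otimes> y \<otimes> inv x \<otimes> inv y \<in> N"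
proof -
  interpret group G by fact
  let ?Q = "G Mod N" and ?f = "\<lambda>x. N #> x"
  note qf = quot_facts[OF N G]
  interpret gh: group_hom G ?Q ?f using qf by (simp add: group_hom_def group_hom_axioms_def G)
  have sub: "subgroup N G" using N normal_imp_subgroup by blast
  have key: "x \<otimes> y \<otimes> inv x \<otimes> inv y \<in> N \<longleftrightarrow> ?f x \<otimes>\<^bsub>?Q\<^esub> ?f y = ?f y \<otimes>\<^bsub>?Q\<^esub> ?f x"
    if xy: "x \<in> carrier G" "y \<in> carrier G" for x y
  proof -
    let ?w = "x \<otimes> y \<otimes> inv x \<otimes> inv y"
    have wc: "?w \<in> carrier G" using xy by simp
    have "?w \<in> N \<longleftrightarrow> ?f ?w = \<one>\<^bsub>?Q\<^esub>"
    proof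
      assume "?w \<in> N" thus "?f ?w = \<one>\<^bsub>?Q\<^esub>" using qf(4) by blast
    next
      assume "?f ?w = \<one>\<^bsub>?Q\<^esub>"
      hence "N #> ?w = N" by simp
      thus "?w \<in> N" using rcos_self[OF wc sub] by simp
    qed
    also have "?f ?w = ?f x \<otimes>\<^bsub>?Q\<^esub> ?f y \<otimes>\<^bsub>?Q\<^esub> inv\<^bsub>?Q\<^esub> ?f x \<otimes>\<^bsub>?Q\<^esub> inv\<^bsub>?Q\<^esub> ?f y"
      using xy by simp
    also have "\<dots> = \<one>\<^bsub>?Q\<^esub> \<longleftrightarrow> ?f x \<otimes>\<^bsub>?Q\<^esub> ?f y = ?f y \<otimes>\<^bsub>?Q\<^esub> ?f x"
      using xy by (intro gh.H.comm_iff_one) auto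
    finally show ?thesis .
  qed
  have s1: "?f a \<otimes>\<^bsub>?Q\<^esub> ?f z = ?f z \<otimes>\<^bsub>?Q\<^esub> ?f a" if a: "a \<in> A" and z: "z \<in> carrier G" for a z
  proof -
    have "z \<in> generate G A" using z gen by simp
    moreover have "\<forall>b\<in>A. ?f a \<otimes>\<^bsub>?Q\<^esub> ?f b = ?f b \<otimes>\<^bsub>?Q\<^esub> ?f a"
      using hA a A key by blast
    ultimately show ?thesis using comm_generate[OF G qf(1) qf(2) A, of "?f a"] a A by auto
  qed
  have "?f x \<otimes>\<^bsub>?Q\<^esub> ?f y = ?f y \<otimes>\<^bsub>?Q\<^esub> ?f x"
  proof -
    have "y \<in> generate G A" using y gen by simp
    moreover have "\<forall>b\<in>A. ?f x \<otimes>\<^bsub>?Q\<^esub> ?f b = ?f b \<otimes>\<^bsub>?Q\<^esub> ?f x"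
      using s1 x by metis
    ultimately show ?thesis using comm_generate[OF G qf(1) qf(2) A, of "?f x"] x by auto
  qed
  thus ?thesis using key x y by blast
qed

lemma setupS:
  fixes G :: "('a,'b) monoid_scheme" (structure)
  assumes G: "group G" and a: "a ` {1..n} \<subseteq> carrier G"
    and cen: "\<forall>g\<in>carrier G. zG G a n \<otimes>\<^bsub>G\<^esub> g = g \<otimes>\<^bsub>G\<^esub> zG G a n"
  shows "group (GbarS G a n S)" "projbarS G a n S \<in> hom G (GbarS G a n S)"
    "projbarS G a n S ` carrier G = carrier (GbarS G a n S)"
    "projbarS G a n S (zG G a n) = \<one>\<^bsub>GbarS G a n S\<^esub>"
    "\<forall>j\<in>{1..n}-S. projbarS G a n S (a j) = \<one>\<^bsub>GbarS G a n S\<^esub>"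
proof -
  interpret group G by fact
  let ?N = "NS G a n S"
  have Y: "a ` ({1..n} - S) \<subseteq> carrier G" using a by auto
  have Nn: "?N \<lhd> G" and NY: "a ` ({1..n} - S) \<subseteq> ?N"
    unfolding NS_def using nclosure_normal[OF G Y] by auto
  note q1 = quot_facts[OF Nn G]
  have GS: "GS G a n S = G Mod ?N" by (simp add: GS_def)
  have pS: "projS G a n S = (\<lambda>x. ?N #> x)" by (simp add: projS_def fun_eq_iff)
  have grGS: "group (GS G a n S)" using q1 GS by simp
  have hS: "projS G a n S \<in> hom G (GS G a n S)" using q1 GS pS by simp
  have surjS: "projS G a n S ` carrier G = carrier (GS G a n S)" using q1 GS pS by simp
  have zc: "zG G a n \<in> carrier G" unfolding zG_def using a
    by (intro mprod_carrier[OF G]) auto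
  have zS: "zS G a n S = projS G a n S (zG G a n)"
  proof -
    have "set (map a [1..<Suc n]) \<subseteq> carrier G" using a by auto
    from mprod_hom[OF G grGS hS this]
    show ?thesis unfolding zS_def zG_def by (simp add: o_def)
  qed
  interpret ghS: group_hom G "GS G a n S" "projS G a n S"
    using grGS hS by (simp add: group_hom_def group_hom_axioms_def G)
  have zSc: "zS G a n S \<in> carrier (GS G a n S)" using zS zc by simp
  have zcen: "\<forall>g\<in>carrier (GS G a n S). zS G a n S \<otimes>\<^bsub>GS G a n S\<^esub> g = g \<otimes>\<^bsub>GS G a n S\<^esub> zS G a n S"
  proof
    fix g assume "g \<in> carrier (GS G a n S)"
    then obtain x where x: "x \<in> carrier G" "g = projS G a n S x" using surjS by auto
    show "zS G a n S \<otimes>\<^bsub>GS G a n S\<^esub> g = g \<otimes>\<^bsub>GS G a n S\<^esub> zS G a n S"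
      using x zc cen zS by (simp flip: ghS.hom_mult)
  qed
  let ?Z = "generate (GS G a n S) {zS G a n S}"
  have Zn: "?Z \<lhd> GS G a n S" using central_generate_normal[OF grGS zSc zcen] .
  note q2 = quot_facts[OF Zn grGS]
  have GB: "GbarS G a n S = GS G a n S Mod ?Z" by (simp add: GbarS_def)
  have pB: "projbarS G a n S = (\<lambda>u. r_coset (GS G a n S) ?Z u) \<circ> projS G a n S"
    by (simp add: projbarS_def fun_eq_iff)
  show "group (GbarS G a n S)" using q2 GB by simp
  show "projbarS G a n S \<in> hom G (GbarS G a n S)"
    unfolding pB GB using Group.hom_compose[OF hS q2(2)] by simp
  show "projbarS G a n S ` carrier G = carrier (GbarS G a n S)"
    unfolding pB GB image_comp[symmetric] surjS using q2(3) .
  show "projbarS G a n S (zG G a n) = \<one>\<^bsub>GbarS G a n S\<^esub>"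
    unfolding pB GB using q2(4)[of "zS G a n S"] zS by (simp add: generate.incl)
  show "\<forall>j\<in>{1..n}-S. projbarS G a n S (a j) = \<one>\<^bsub>GbarS G a n S\<^esub>"
  proof
    fix j assume j: "j \<in> {1..n} - S"
    have "a j \<in> ?N" using NY j by auto
    hence "projS G a n S (a j) = \<one>\<^bsub>GS G a n S\<^esub>" using q1(4) pS GS by simp
    moreover have "\<one>\<^bsub>GS G a n S\<^esub> \<in> ?Z" by (rule generate.one)
    ultimately show "projbarS G a n S (a j) = \<one>\<^bsub>GbarS G a n S\<^esub>"
      unfolding pB GB using q2(4) by simp
  qed
qed



lemma hom_comm:
  assumes "group G" "group H" "f \<in> hom G H" "x \<in> carrier G" "y \<in> carrier G"
  shows "f (x \<otimes>\<^bsub>G\<^esub> y \<otimes>\<^bsub>G\<^esub> inv\<^bsub>G\<^esub> x \<otimes>\<^bsub>G\<^esub> inv\<^bsub>G\<^esub> y)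
       = f x \<otimes>\<^bsub>H\<^esub> f y \<otimes>\<^bsub>H\<^esub> inv\<^bsub>H\<^esub> f x \<otimes>\<^bsub>H\<^esub> inv\<^bsub>H\<^esub> f y"
proof -
  interpret group_hom G H f using assms by (simp add: group_hom_def group_hom_axioms_def)
  show ?thesis using assms by simp
qed

lemma comm_triv:
  assumes "group H" "x \<in> carrier H" "y \<in> carrier H" "x = \<one>\<^bsub>H\<^esub> \<or> y = \<one>\<^bsub>H\<^esub>"
  shows "x \<otimes>\<^bsub>H\<^esub> y \<otimes>\<^bsub>H\<^esub> inv\<^bsub>H\<^esub> x \<otimes>\<^bsub>H\<^esub> inv\<^bsub>H\<^esub> y = \<one>\<^bsub>H\<^esub>"
proof -
  interpret group H by fact
  show ?thesis using assms by (auto simp: m_assoc)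
qed

lemma key_comm:
  fixes G :: "('a,'b) monoid_scheme" (structure)
  assumes G: "group G" and gr: "\<And>i. i \<in> I \<Longrightarrow> group (\<Gamma> i)"
    and hom: "\<And>i. i \<in> I \<Longrightarrow> \<pi> i \<in> hom G (\<Gamma> i)"
    and A: "A \<subseteq> carrier G" and gen: "generate G A = carrier G"
    and gens: "\<And>x y. x \<in> A \<Longrightarrow> y \<in> A \<Longrightarrow>
        (\<forall>r\<in>I - {i}. \<pi> r (x \<otimes> y \<otimes> inv x \<otimes> inv y) = \<one>\<^bsub>\<Gamma> r\<^esub>)
      \<or> \<pi> i (x \<otimes> y \<otimes> inv x \<otimes> inv y) = \<one>\<^bsub>\<Gamma> i\<^esub>"
    and i: "i \<in> I" and x: "x \<in> carrier G" and y: "y \<in> carrier G"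
  shows "\<exists>d\<in>carrier G. \<pi> i d = \<pi> i (x \<otimes> y \<otimes> inv x \<otimes> inv y) \<and> (\<forall>r\<in>I - {i}. \<pi> r d = \<one>\<^bsub>\<Gamma> r\<^esub>)"
proof -
  interpret group G by fact
  have gh: "\<And>r. r \<in> I \<Longrightarrow> group_hom G (\<Gamma> r) (\<pi> r)"
    using gr hom G by (simp add: group_hom_def group_hom_axioms_def)
  define K where "K = {d\<in>carrier G. \<forall>r\<in>I - {i}. \<pi> r d = \<one>\<^bsub>\<Gamma> r\<^esub>}"
  define L where "L = {u\<in>carrier G. \<exists>d\<in>K. \<pi> i d = \<pi> i u}"
  have oneK: "\<one> \<in> K" unfolding K_def using gh group_hom.hom_one by fastforce
  have multK: "d1 \<otimes> d2 \<in> K" if "d1 \<in> K" "d2 \<in> K" for d1 d2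
  proof -
    have "\<pi> r (d1 \<otimes> d2) = \<one>\<^bsub>\<Gamma> r\<^esub>" if r: "r \<in> I - {i}" for r
    proof -
      interpret group_hom G "\<Gamma> r" "\<pi> r" using gh r by auto
      show ?thesis using \<open>d1 \<in> K\<close> \<open>d2 \<in> K\<close> r unfolding K_def by simp
    qed
    thus ?thesis using that unfolding K_def by auto
  qed
  have invK: "inv d \<in> K" if "d \<in> K" for d
  proof -
    have "\<pi> r (inv d) = \<one>\<^bsub>\<Gamma> r\<^esub>" if r: "r \<in> I - {i}" for r
    proof -
      interpret group_hom G "\<Gamma> r" "\<pi> r" using gh r by auto
      show ?thesis using \<open>d \<in> K\<close> r unfolding K_def by simp
    qed
    thus ?thesis using that unfolding K_def by auto
  qed
  have conjK: "g \<otimes> d \<otimes> inv g \<in> K" if "d \<in> K" "g \<in> carrier G" for d g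
  proof -
    have "\<pi> r (g \<otimes> d \<otimes> inv g) = \<one>\<^bsub>\<Gamma> r\<^esub>" if r: "r \<in> I - {i}" for r
    proof -
      interpret group_hom G "\<Gamma> r" "\<pi> r" using gh r by auto
      show ?thesis using \<open>d \<in> K\<close> \<open>g \<in> carrier G\<close> r unfolding K_def by simp
    qed
    thus ?thesis using that unfolding K_def by auto
  qed
  interpret gi: group_hom G "\<Gamma> i" "\<pi> i" using gh i by auto
  have Ln: "L \<lhd> G"
  proof (subst normal_inv_iff, intro conjI ballI)
    show "subgroup L G"
    proof (rule subgroupI)
      show "L \<subseteq> carrier G" unfolding L_def by auto
      show "L \<noteq> {}" using oneK unfolding L_def by auto
      fix u assume u: "u \<in> L"
      then obtain d where d: "d \<in> K" "\<pi> i d = \<pi> i u" "u \<in> carrier G" unfolding L_def by auto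
      have "d \<in> carrier G" using d K_def by auto
      thus "inv u \<in> L" using d invK unfolding L_def by (auto intro!: bexI[of _ "inv d"])
      fix v assume v: "v \<in> L"
      then obtain e where e: "e \<in> K" "\<pi> i e = \<pi> i v" "v \<in> carrier G" unfolding L_def by auto
      have "e \<in> carrier G" using e K_def by auto
      thus "u \<otimes> v \<in> L" using d e \<open>d \<in> carrier G\<close> multK unfolding L_def
        by (auto intro!: bexI[of _ "d \<otimes> e"])
    qed
    fix g u assume g: "g \<in> carrier G" and u: "u \<in> L"
    then obtain d where d: "d \<in> K" "\<pi> i d = \<pi> i u" "u \<in> carrier G" unfolding L_def by auto
    have "d \<in> carrier G" using d K_def by auto
    thus "g \<otimes> u \<otimes> inv g \<in> L" using d g conjK[OF d(1) g] unfolding L_def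
      by (auto intro!: bexI[of _ "g \<otimes> d \<otimes> inv g"])
  qed
  have gL: "x \<otimes> y \<otimes> inv x \<otimes> inv y \<in> L" if "x \<in> A" "y \<in> A" for x y
  proof -
    have xy: "x \<in> carrier G" "y \<in> carrier G" using that A by auto
    let ?w = "x \<otimes> y \<otimes> inv x \<otimes> inv y"
    have wc: "?w \<in> carrier G" using xy by simp
    from gens[OF that] show ?thesis
    proof
      assume "\<forall>r\<in>I - {i}. \<pi> r ?w = \<one>\<^bsub>\<Gamma> r\<^esub>"
      hence "?w \<in> K" using wc unfolding K_def by auto
      thus ?thesis using wc unfolding L_def by auto
    next
      assume "\<pi> i ?w = \<one>\<^bsub>\<Gamma> i\<^esub>"
      thus ?thesis using wc oneK unfolding L_def by (auto intro!: bexI[of _ "\<one>"])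
    qed
  qed
  have "x \<otimes> y \<otimes> inv x \<otimes> inv y \<in> L"
    using comm_mod[OF G Ln A gen _ x y] gL by blast
  thus ?thesis unfolding L_def K_def by auto
qed



lemma main_aux:
  fixes G :: "('a, 'b) monoid_scheme" (structure)
    and a :: "nat \<Rightarrow> 'a" and n m :: nat and Ss :: "nat \<Rightarrow> nat set"
  assumes G: "group G"
    and a: "a ` {1..n} \<subseteq> carrier G"
    and gen: "generate G (a ` {1..n}) = carrier G"
    and cen: "\<forall>g\<in>carrier G. zG G a n \<otimes>\<^bsub>G\<^esub> g = g \<otimes>\<^bsub>G\<^esub> zG G a n"
    and Ssub: "\<forall>i\<in>{1..m}. Ss i \<subseteq> {1..n}"
    and card: "\<forall>i\<in>{1..m}. \<forall>r\<in>{1..m}. i \<noteq> r \<longrightarrow> card (Ss i \<inter> Ss r) \<le> 1"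
  shows "rhobar G a n Ss m ` carrier (Gbar G a n) \<lhd> Abar G a n Ss m"
proof -
  interpret group G by fact
  define I where "I = {1..m}"
  define \<pi> where "\<pi> i = projbarS G a n (Ss i)" for i
  define \<Gamma> where "\<Gamma> i = GbarS G a n (Ss i)" for i
  note st = setupS[OF G a cen]
  have gr: "\<And>i. group (\<Gamma> i)" and hom: "\<And>i. \<pi> i \<in> hom G (\<Gamma> i)"
    and surj: "\<And>i. \<pi> i ` carrier G = carrier (\<Gamma> i)"
    and zone: "\<And>i. \<pi> i (zG G a n) = \<one>\<^bsub>\<Gamma> i\<^esub>"
    and aone: "\<And>i j. j \<in> {1..n} \<Longrightarrow> j \<notin> Ss i \<Longrightarrow> \<pi> i (a j) = \<one>\<^bsub>\<Gamma> i\<^esub>"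
    unfolding \<pi>_def \<Gamma>_def using st by auto
  have gh: "\<And>i. group_hom G (\<Gamma> i) (\<pi> i)"
    using gr hom G by (simp add: group_hom_def group_hom_axioms_def)
  define \<rho> where "\<rho> g = (\<lambda>i\<in>I. \<pi> i g)" for g
  have Ab: "Abar G a n Ss m = product_group I \<Gamma>" unfolding Abar_def I_def \<Gamma>_def by simp
  have grA: "group (product_group I \<Gamma>)" using gr by simp
  have rhom: "\<rho> \<in> hom G (product_group I \<Gamma>)"
  proof (rule homI)
    fix x assume "x \<in> carrier G"
    thus "\<rho> x \<in> carrier (product_group I \<Gamma>)" using hom unfolding \<rho>_def by (auto intro: hom_in_carrier)
  next
    fix x y assume "x \<in> carrier G" "y \<in> carrier G"
    thus "\<rho> (x \<otimes> y) = \<rho> x \<otimes>\<^bsub>product_group I \<Gamma>\<^esub> \<rho> y"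
      using hom unfolding \<rho>_def by (auto simp: hom_mult[OF hom] intro!: restrict_ext)
  qed
  interpret rh: group_hom G "product_group I \<Gamma>" \<rho>
    using grA rhom G by (simp add: group_hom_def group_hom_axioms_def)
  let ?Z = "generate G {zG G a n}"
  have zc: "zG G a n \<in> carrier G" unfolding zG_def using a by (intro mprod_carrier[OF G]) auto
  have Zsub: "subgroup ?Z G" using zc by (intro generate_is_subgroup) auto
  have Zker: "\<pi> i k = \<one>\<^bsub>\<Gamma> i\<^esub>" if "k \<in> ?Z" for i k
  proof -
    interpret group_hom G "\<Gamma> i" "\<pi> i" using gh by auto
    have "?Z \<subseteq> kernel G (\<Gamma> i) (\<pi> i)"
      using zc zone subgroup_kernel by (intro group.generate_subgroup_incl[OF G]) (auto simp: kernel_def)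
    thus ?thesis using that unfolding kernel_def by blast
  qed
  have rb: "rhobar G a n Ss m (?Z #> g) = \<rho> g" if g: "g \<in> carrier G" for g
  proof -
    have ex: "\<exists>h. h \<in> ?Z #> g" using rcos_self[OF g Zsub] by blast
    define h where "h = (SOME h. h \<in> ?Z #> g)"
    have "h \<in> ?Z #> g" unfolding h_def using someI_ex[OF ex] .
    then obtain k where k: "k \<in> ?Z" "h = k \<otimes> g" unfolding r_coset_def by blast
    have kc: "k \<in> carrier G" by (rule subgroup.mem_carrier[OF Zsub k(1)])
    have "\<pi> i h = \<pi> i g" for i
    proof -
      interpret group_hom G "\<Gamma> i" "\<pi> i" using gh by auto
      show ?thesis using k kc g Zker[OF k(1), of i] by simp
    qed
    thus ?thesis unfolding rhobar_def \<rho>_def I_def \<pi>_def h_def by simp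
  qed
  have img: "rhobar G a n Ss m ` carrier (Gbar G a n) = \<rho> ` carrier G"
    unfolding Gbar_def carrier_FactGroup image_comp using rb by (auto simp: o_def)
  have key: "\<exists>d\<in>carrier G. \<pi> i d = \<pi> i (x \<otimes> y \<otimes> inv x \<otimes> inv y) \<and> (\<forall>r\<in>I - {i}. \<pi> r d = \<one>\<^bsub>\<Gamma> r\<^esub>)"
    if i: "i \<in> I" and x: "x \<in> carrier G" and y: "y \<in> carrier G" for i x y
  proof (rule key_comm[OF G gr hom a gen _ i x y])
    fix x y assume "x \<in> a ` {1..n}" "y \<in> a ` {1..n}"
    then obtain j k where jk: "j \<in> {1..n}" "k \<in> {1..n}" "x = a j" "y = a k" by auto
    have xy: "x \<in> carrier G" "y \<in> carrier G" using jk a by auto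
    let ?w = "x \<otimes> y \<otimes> inv x \<otimes> inv y"
    have pw: "\<pi> r ?w = \<pi> r x \<otimes>\<^bsub>\<Gamma> r\<^esub> \<pi> r y \<otimes>\<^bsub>\<Gamma> r\<^esub> inv\<^bsub>\<Gamma> r\<^esub> \<pi> r x \<otimes>\<^bsub>\<Gamma> r\<^esub> inv\<^bsub>\<Gamma> r\<^esub> \<pi> r y" for r
      using hom_comm[OF G gr hom xy] .
    have pc: "\<pi> r x \<in> carrier (\<Gamma> r)" "\<pi> r y \<in> carrier (\<Gamma> r)" for r
      using hom_in_carrier[OF hom] xy by auto
    have triv: "\<pi> r ?w = \<one>\<^bsub>\<Gamma> r\<^esub>" if "\<pi> r x = \<one>\<^bsub>\<Gamma> r\<^esub> \<or> \<pi> r y = \<one>\<^bsub>\<Gamma> r\<^esub>" for r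
      unfolding pw using comm_triv[OF gr pc that] .
    show "(\<forall>r\<in>I - {i}. \<pi> r ?w = \<one>\<^bsub>\<Gamma> r\<^esub>) \<or> \<pi> i ?w = \<one>\<^bsub>\<Gamma> i\<^esub>"
    proof (cases "\<forall>r\<in>I - {i}. \<pi> r ?w = \<one>\<^bsub>\<Gamma> r\<^esub>")
      case True thus ?thesis by simp
    next
      case False
      then obtain r where r: "r \<in> I" "r \<noteq> i" "\<pi> r ?w \<noteq> \<one>\<^bsub>\<Gamma> r\<^esub>" by auto
      have jr1: "j \<in> Ss r"
      proof (rule ccontr)
        assume "j \<notin> Ss r"
        hence "\<pi> r x = \<one>\<^bsub>\<Gamma> r\<^esub>" using aone jk by simp
        hence "\<pi> r ?w = \<one>\<^bsub>\<Gamma> r\<^esub>" using triv by blast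
        thus False using r(3) by simp
      qed
      have jr2: "k \<in> Ss r"
      proof (rule ccontr)
        assume "k \<notin> Ss r"
        hence "\<pi> r y = \<one>\<^bsub>\<Gamma> r\<^esub>" using aone jk by simp
        hence "\<pi> r ?w = \<one>\<^bsub>\<Gamma> r\<^esub>" using triv by blast
        thus False using r(3) by simp
      qed
      note jr = jr1 jr2
      have "j \<noteq> k"
      proof
        assume "j = k"
        hence "?w = \<one>" using xy jk by (simp add: m_assoc)
        thus False using r(3) group_hom.hom_one[OF gh] by simp
      qed
      have "\<not> (j \<in> Ss i \<and> k \<in> Ss i)"
      proof
        assume ji: "j \<in> Ss i \<and> k \<in> Ss i"
        have "Ss i \<subseteq> {1..n}" using Ssub i by (auto simp: I_def)
        hence fin: "finite (Ss i \<inter> Ss r)" by (meson finite_Int finite_atLeastAtMost finite_subset)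
        have "{j, k} \<subseteq> Ss i \<inter> Ss r" using ji jr by auto
        hence "card {j, k} \<le> card (Ss i \<inter> Ss r)" using fin by (rule card_mono[rotated])
        moreover have "card (Ss i \<inter> Ss r) \<le> 1" using card i r unfolding I_def by auto
        ultimately show False using \<open>j \<noteq> k\<close> by simp
      qed
      hence "\<pi> i x = \<one>\<^bsub>\<Gamma> i\<^esub> \<or> \<pi> i y = \<one>\<^bsub>\<Gamma> i\<^esub>" using aone jk by auto
      hence "\<pi> i ?w = \<one>\<^bsub>\<Gamma> i\<^esub>" by (rule triv)
      thus ?thesis by simp
    qed
  qed
  have assemble: "\<forall>k. k \<le> m \<longrightarrow> (\<exists>g'\<in>carrier G. \<forall>i\<in>I.
      \<pi> i g' = (if i \<le> k then x i \<otimes>\<^bsub>\<Gamma> i\<^esub> \<pi> i g \<otimes>\<^bsub>\<Gamma> i\<^esub> inv\<^bsub>\<Gamma> i\<^esub> x i else \<pi> i g))"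
    if x: "x \<in> carrier (product_group I \<Gamma>)" and g: "g \<in> carrier G" for x g
  proof
    fix k show "k \<le> m \<longrightarrow> (\<exists>g'\<in>carrier G. \<forall>i\<in>I.
      \<pi> i g' = (if i \<le> k then x i \<otimes>\<^bsub>\<Gamma> i\<^esub> \<pi> i g \<otimes>\<^bsub>\<Gamma> i\<^esub> inv\<^bsub>\<Gamma> i\<^esub> x i else \<pi> i g))"
    proof (induction k)
      case 0
      show ?case using g by (auto simp: I_def)
    next
      case (Suc k)
      show ?case
      proof
        assume km: "Suc k \<le> m"
        then obtain g' where g': "g' \<in> carrier G" and
          hg': "\<forall>i\<in>I. \<pi> i g' = (if i \<le> k then x i \<otimes>\<^bsub>\<Gamma> i\<^esub> \<pi> i g \<otimes>\<^bsub>\<Gamma> i\<^esub> inv\<^bsub>\<Gamma> i\<^esub> x i else \<pi> i g)"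
          using Suc by auto
        define i0 where "i0 = Suc k"
        have i0: "i0 \<in> I" using km unfolding I_def i0_def by auto
        have "x i0 \<in> carrier (\<Gamma> i0)" using x i0 by auto
        hence "x i0 \<in> \<pi> i0 ` carrier G" using surj[of i0] by simp
        then obtain u where u: "u \<in> carrier G" "\<pi> i0 u = x i0" by blast
        obtain d where d: "d \<in> carrier G" "\<pi> i0 d = \<pi> i0 (inv g \<otimes> u \<otimes> inv (inv g) \<otimes> inv u)"
          "\<forall>r\<in>I - {i0}. \<pi> r d = \<one>\<^bsub>\<Gamma> r\<^esub>"
          using key[OF i0 _ u(1), of "inv g"] g by auto
        have eq: "g \<otimes> (inv g \<otimes> u \<otimes> inv (inv g) \<otimes> inv u) = u \<otimes> g \<otimes> inv u"
          using g u by (simp add: m_assoc) (simp add: m_assoc[symmetric])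
        show "\<exists>g'\<in>carrier G. \<forall>i\<in>I. \<pi> i g' = (if i \<le> Suc k then x i \<otimes>\<^bsub>\<Gamma> i\<^esub> \<pi> i g \<otimes>\<^bsub>\<Gamma> i\<^esub> inv\<^bsub>\<Gamma> i\<^esub> x i else \<pi> i g)"
        proof (intro bexI ballI)
          show "g' \<otimes> d \<in> carrier G" using g' d by simp
          fix i assume i: "i \<in> I"
          interpret group_hom G "\<Gamma> i" "\<pi> i" using gh by auto
          show "\<pi> i (g' \<otimes> d) = (if i \<le> Suc k then x i \<otimes>\<^bsub>\<Gamma> i\<^esub> \<pi> i g \<otimes>\<^bsub>\<Gamma> i\<^esub> inv\<^bsub>\<Gamma> i\<^esub> x i else \<pi> i g)"
          proof (cases "i = i0")
            case True
            have "\<pi> i (g' \<otimes> d) = \<pi> i g \<otimes>\<^bsub>\<Gamma> i\<^esub> \<pi> i (inv g \<otimes> u \<otimes> inv (inv g) \<otimes> inv u)"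
            proof -
              have d2: "\<pi> i d = \<pi> i (inv g \<otimes> u \<otimes> inv (inv g) \<otimes> inv u)" using d(2) True by simp
              have g'i: "\<pi> i g' = \<pi> i g" using hg' i True i0_def by simp
              have "\<pi> i (g' \<otimes> d) = \<pi> i g' \<otimes>\<^bsub>\<Gamma> i\<^esub> \<pi> i d" using g' d(1) by simp
              thus ?thesis using d2 g'i by simp
            qed
            also have "\<dots> = \<pi> i (u \<otimes> g \<otimes> inv u)"
              using g u by (simp flip: eq)
            also have "\<dots> = x i \<otimes>\<^bsub>\<Gamma> i\<^esub> \<pi> i g \<otimes>\<^bsub>\<Gamma> i\<^esub> inv\<^bsub>\<Gamma> i\<^esub> x i"
            proof -
              have "\<pi> i (u \<otimes> g \<otimes> inv u) = \<pi> i u \<otimes>\<^bsub>\<Gamma> i\<^esub> \<pi> i g \<otimes>\<^bsub>\<Gamma> i\<^esub> inv\<^bsub>\<Gamma> i\<^esub> \<pi> i u"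
                using g u by simp
              thus ?thesis using True u(2) by simp
            qed
            finally show ?thesis using True i0_def by simp
          next
            case False
            have "\<pi> i (g' \<otimes> d) = \<pi> i g'" using False g' d i by simp
            thus ?thesis using hg' i False i0_def by auto
          qed
        qed
      qed
    qed
  qed
  show ?thesis unfolding img Ab
  proof (subst group.normal_inv_iff[OF grA], intro conjI ballI)
    show "subgroup (\<rho> ` carrier G) (product_group I \<Gamma>)" by (rule rh.img_is_subgroup)
    fix x h assume x: "x \<in> carrier (product_group I \<Gamma>)" and h: "h \<in> \<rho> ` carrier G"
    then obtain g where g: "g \<in> carrier G" "h = \<rho> g" by auto
    obtain g' where g': "g' \<in> carrier G" and
      hg': "\<forall>i\<in>I. \<pi> i g' = x i \<otimes>\<^bsub>\<Gamma> i\<^esub> \<pi> i g \<otimes>\<^bsub>\<Gamma> i\<^esub> inv\<^bsub>\<Gamma> i\<^esub> x i"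
      using assemble[OF x g(1)] by (auto simp: I_def)
    have "x \<otimes>\<^bsub>product_group I \<Gamma>\<^esub> h \<otimes>\<^bsub>product_group I \<Gamma>\<^esub> inv\<^bsub>product_group I \<Gamma>\<^esub> x = \<rho> g'"
    proof -
      have ix: "inv\<^bsub>product_group I \<Gamma>\<^esub> x = (\<lambda>i\<in>I. inv\<^bsub>\<Gamma> i\<^esub> x i)"
        using x gr by (intro inv_product_group) auto
      show ?thesis unfolding ix g(2) \<rho>_def mult_product_group
        by (intro restrict_ext) (simp add: hg')
    qed
    thus "x \<otimes>\<^bsub>product_group I \<Gamma>\<^esub> h \<otimes>\<^bsub>product_group I \<Gamma>\<^esub> inv\<^bsub>product_group I \<Gamma>\<^esub> x \<in> \<rho> ` carrier G"
      using g' by auto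
  qed
qed


theorem mainTheorem12:
  fixes G :: "('a, 'b) monoid_scheme"
    and a :: "nat \<Rightarrow> 'a" and n m :: nat and Ss :: "nat \<Rightarrow> nat set"
  assumes "group G"
    and "a ` {1..n} \<subseteq> carrier G"
    and "generate G (a ` {1..n}) = carrier G"
    and "\<forall>g\<in>carrier G. zG G a n \<otimes>\<^bsub>G\<^esub> g = g \<otimes>\<^bsub>G\<^esub> zG G a n"
    and "\<forall>i\<in>{1..m}. Ss i \<subseteq> {1..n}"
    and "\<forall>i\<in>{1..m}. \<forall>r\<in>{1..m}. i \<noteq> r \<longrightarrow> card (Ss i \<inter> Ss r) \<le> 1"
    and "\<forall>i\<in>{1..m}. \<forall>k\<in>Ss i.
           free_basis (GbarS G a n (Ss i)) (Ss i - {k}) (\<lambda>j. projbarS G a n (Ss i) (a j))"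
  shows "rhobar G a n Ss m ` carrier (Gbar G a n) \<lhd> Abar G a n Ss m"
  using main_aux[OF assms(1-6)] .

end
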